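(* Let $f,g$ be parking functions and $F_f^*,F_g^*$ the dual basis elements in the graded dual $\mathrm{PSym}^*$ (whose product is the transpose of the coproduct of $\mathrm{PSym}$). Then $$F_f^*\cdot F_g^*=\sum_{h:\ f\backslash g\ \le_P\ h\ \le_P\ f/g}F_h^*.$$
   Context: $\mathrm{PBT}_n$: planar binary trees with $n+1$ leaves, numbered left to right; $\mathrm{Des}(t)=\{1\le i\le n-1:\text{the }(i+1)\text{-st leaf is a right child}\}$. For $\sigma\in S_n$, $\mathrm{Des}(\sigma)=\{i:\sigma(i)>\sigma(i+1)\}$, $\mathrm{Inv}(\sigma)=\{(i,j):i<j,\sigma(i)>\sigma(j)\}$. A parking function of degree $n$ is a pair $(\sigma,t)\in S_n\times \mathrm{PBT}_n$ with $\mathrm{Des}(t)\subseteq\mathrm{Des}(\sigma)$. Weak order $\sigma\le_w\tau$ iff $\mathrm{Inv}(\sigma)\subseteq\mathrm{Inv}(\tau)$; Tamari order $\le_T$: reflexive–transitive closure of replacing a subtree $x(A,y(B,C))$ by $x(y(A,B),C)$. Parking order: $(\sigma,s)\le_P(\tau,t)$ iff $\sigma\le_w\tau$ and $s\le_T t$. Splitting of binary trees: for $0\le i\le n$, with $P$ the path from the root to leaf $i+1$, ${}^it$ (resp. $t^i$) is obtained by deleting at each node of $P$ the child strictly to the right (resp. left) of the path with its subtree and contracting nodes with one child. For $f=(\sigma,t)$, ${}^if=(\mathrm{std}(\sigma(1)\cdots\sigma(i)),{}^it)$ and $f^i=(\mathrm{std}(\sigma(i+1)\cdots\sigma(n)),t^i)$,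 where $\mathrm{std}$ replaces the letters of a word with distinct letters by $1,2,\dots$ preserving relative order. $\mathrm{PSym}$ has basis $\{F_f\}$ over parking functions with coproduct $\Delta(F_f)=\sum_{i=0}^{n}F_{{}^if}\otimes F_{f^i}$. For $f=(\sigma,s)$ of degree $n$ and $g=(\tau,t)$ of degree $m$: $f/g=((\sigma(1)+m)\cdots(\sigma(n)+m)\tau(1)\cdots\tau(m),\ s/t)$ and $f\backslash g=(\sigma(1)\cdots\sigma(n)(\tau(1)+n)\cdots(\tau(m)+n),\ s\backslash t)$, where for trees $s/t$ identifies the root of $s$ with the leftmost leaf of $t$, and $s\backslash t$ identifies the root of $t$ with the rightmost leaf of $s$. *)

theory Defs
  imports Main
begin

datatype btree = Leaf | Node btree btree

fun nodes :: "btree \<Rightarrow> nat" where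
  "nodes Leaf = 0"
| "nodes (Node l r) = nodes l + nodes r + 1"

text \<open>Directions of the leaves, left to right: True = the leaf is a right child.
  The argument is the direction of the current subtree (root counted as left).\<close>
fun leaf_dirs :: "bool \<Rightarrow> btree \<Rightarrow> bool list" where
  "leaf_dirs d Leaf = [d]"
| "leaf_dirs d (Node l r) = leaf_dirs False l @ leaf_dirs True r"

text \<open>Des(t) = {1 <= i <= n-1 : the (i+1)-st leaf is a right child};
  the (i+1)-st leaf has 0-based index i in the list.\<close>
definition tree_des :: "btree \<Rightarrow> nat set" where
  "tree_des t = {i. 1 \<le> i \<and> i + 1 \<le> nodes t \<and> leaf_dirs False t ! i}"

definition is_perm :: "nat list \<Rightarrow> bool" where
  "is_perm s \<longleftrightarrow> distinct s \<and> set s = {1..length s}"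

definition perm_des :: "nat list \<Rightarrow> nat set" where
  "perm_des s = {i. 1 \<le> i \<and> i < length s \<and> s ! (i - 1) > s ! i}"

definition perm_inv :: "nat list \<Rightarrow> (nat \<times> nat) set" where
  "perm_inv s = {(i, j). 1 \<le> i \<and> i < j \<and> j \<le> length s \<and> s ! (i - 1) > s ! (j - 1)}"

definition weak_le :: "nat list \<Rightarrow> nat list \<Rightarrow> bool" where
  "weak_le s t \<longleftrightarrow> length s = length t \<and> perm_inv s \<subseteq> perm_inv t"

definition std :: "nat list \<Rightarrow> nat list" where
  "std w = map (\<lambda>x. card {y \<in> set w. y < x} + 1) w"

inductive rot :: "btree \<Rightarrow> btree \<Rightarrow> bool" where
  rot_root: "rot (Node A (Node B C)) (Node (Node A B) C)"
| rot_left: "rot l l' \<Longrightarrow> rot (Node l r) (Node l' r)"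
| rot_right: "rot r r' \<Longrightarrow> rot (Node l r) (Node l r')"

definition tamari_le :: "btree \<Rightarrow> btree \<Rightarrow> bool" where
  "tamari_le = rot\<^sup>*\<^sup>*"

type_synonym pf = "nat list \<times> btree"

definition is_pf :: "pf \<Rightarrow> bool" where
  "is_pf f \<longleftrightarrow> is_perm (fst f) \<and> nodes (snd f) = length (fst f)
                \<and> tree_des (snd f) \<subseteq> perm_des (fst f)"

definition pf_deg :: "pf \<Rightarrow> nat" where
  "pf_deg f = length (fst f)"

definition parking_le :: "pf \<Rightarrow> pf \<Rightarrow> bool" where
  "parking_le f g \<longleftrightarrow> weak_le (fst f) (fst g) \<and> tamari_le (snd f) (snd g)"

text \<open>Left part ^i t and right part t^i along the path to leaf i+1
  (leaves indexed 0..n here, so leaf i+1 has index i).\<close>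
fun split_l :: "nat \<Rightarrow> btree \<Rightarrow> btree" where
  "split_l i Leaf = Leaf"
| "split_l i (Node l r) =
     (if i < nodes l + 1 then split_l i l else Node l (split_l (i - (nodes l + 1)) r))"

fun split_r :: "nat \<Rightarrow> btree \<Rightarrow> btree" where
  "split_r i Leaf = Leaf"
| "split_r i (Node l r) =
     (if i < nodes l + 1 then Node (split_r i l) r else split_r (i - (nodes l + 1)) r)"

definition pf_split_l :: "nat \<Rightarrow> pf \<Rightarrow> pf" where
  "pf_split_l i f = (std (take i (fst f)), split_l i (snd f))"

definition pf_split_r :: "nat \<Rightarrow> pf \<Rightarrow> pf" where
  "pf_split_r i f = (std (drop i (fst f)), split_r i (snd f))"

text \<open>s / t: root of s identified with leftmost leaf of t.\<close>
fun graft_over :: "btree \<Rightarrow> btree \<Rightarrow> btree" where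
  "graft_over s Leaf = s"
| "graft_over s (Node l r) = Node (graft_over s l) r"

text \<open>s \ t: root of t identified with rightmost leaf of s.\<close>
fun graft_under :: "btree \<Rightarrow> btree \<Rightarrow> btree" where
  "graft_under Leaf t = t"
| "graft_under (Node l r) t = Node l (graft_under r t)"

definition pf_over :: "pf \<Rightarrow> pf \<Rightarrow> pf" where
  "pf_over f g = (map (\<lambda>x. x + length (fst g)) (fst f) @ fst g, graft_over (snd f) (snd g))"

definition pf_under :: "pf \<Rightarrow> pf \<Rightarrow> pf" where
  "pf_under f g = (fst f @ map (\<lambda>x. x + length (fst f)) (fst g), graft_under (snd f) (snd g))"

text \<open>An element of PSym* is given by its coefficient function on the basis F*_h
  (h a parking function); values on non-parking-functions are irrelevant and kept 0.
  The product is the transpose of the coproduct of PSym: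
  (a . b)(h) = sum_{i=0}^{deg h} a(^i h) * b(h^i).\<close>
type_synonym psym_dual = "pf \<Rightarrow> int"

definition Fstar :: "pf \<Rightarrow> psym_dual" where
  "Fstar f = (\<lambda>h. if h = f then 1 else 0)"

definition dual_mult :: "psym_dual \<Rightarrow> psym_dual \<Rightarrow> psym_dual" where
  "dual_mult a b = (\<lambda>h. if is_pf h
      then (\<Sum>i\<in>{0..pf_deg h}. a (pf_split_l i h) * b (pf_split_r i h)) else 0)"

end

theory Submission
  imports Defs
begin
lemma rot_nodes: "rot t t' \<Longrightarrow> nodes t = nodes t'"
  by (induct rule: rot.induct) auto

lemma tam_nodes: "tamari_le t t' \<Longrightarrow> nodes t = nodes t'"
  unfolding tamari_le_def by (induct rule: rtranclp_induct) (auto dest: rot_nodes)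

lemma tam_refl: "tamari_le t t" unfolding tamari_le_def by simp

lemma tam_rot: "rot a b \<Longrightarrow> tamari_le a b" unfolding tamari_le_def by simp

lemma tam_trans[trans]: "tamari_le a b \<Longrightarrow> tamari_le b c \<Longrightarrow> tamari_le a c"
  unfolding tamari_le_def by simp

lemma tam_left: "tamari_le a a' \<Longrightarrow> tamari_le (Node a b) (Node a' b)"
  unfolding tamari_le_def
proof (induct rule: rtranclp_induct)
  case base then show ?case by simp
next
  case (step y z) then show ?case by (meson rot_left rtranclp.rtrancl_into_rtrancl)
qed

lemma tam_right: "tamari_le b b' \<Longrightarrow> tamari_le (Node a b) (Node a b')"
  unfolding tamari_le_def
proof (induct rule: rtranclp_induct)
  case base then show ?case by simp
next
  case (step y z) then show ?case by (meson rot_right rtranclp.rtrancl_into_rtrancl)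
qed

lemma graft_under_Node: "tamari_le (graft_under s (Node a b)) (Node (graft_under s a) b)"
proof (induct s)
  case Leaf then show ?case by (simp add: tam_refl)
next
  case (Node x y)
  have "tamari_le (graft_under (Node x y) (Node a b)) (Node x (Node (graft_under y a) b))"
    using Node by (simp add: tam_right)
  also have "tamari_le \<dots> (Node (graft_under (Node x y) a) b)"
    by (simp add: tam_rot rot_root)
  finally show ?case using tam_trans by blast
qed

lemma graft_over_Node: "tamari_le (Node a (graft_over b u)) (graft_over (Node a b) u)"
proof (induct u)
  case Leaf then show ?case by (simp add: tam_refl)
next
  case (Node x y)
  have "tamari_le (Node a (graft_over b (Node x y))) (Node (Node a (graft_over b x)) y)"
    by (simp add: tam_rot rot_root)
  also have "tamari_le \<dots> (graft_over (Node a b) (Node x y))"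
    using Node by (simp add: tam_left)
  finally show ?case using tam_trans by blast
qed

lemma split_interval:
  "tamari_le (graft_under (split_l n t) (split_r n t)) t \<and> tamari_le t (graft_over (split_l n t) (split_r n t))"
proof (induct t arbitrary: n)
  case Leaf then show ?case by (simp add: tam_refl)
next
  case (Node l r)
  show ?case
  proof (cases "n < nodes l + 1")
    case True
    from Node(1)[of n] True show ?thesis
      by (auto intro: tam_trans[OF graft_under_Node] tam_left)
  next
    case False
    from Node(2)[of "n - (nodes l + 1)"] False show ?thesis
      by (auto intro: tam_trans[OF _ graft_over_Node] tam_right)
  qed
qed

fun pot :: "btree \<Rightarrow> nat" where
  "pot Leaf = 0"
| "pot (Node l r) = pot l + pot r + nodes l"

lemma rot_pot: "rot t t' \<Longrightarrow> pot t < pot t'"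
  by (induct rule: rot.induct) (auto dest: rot_nodes)

lemma tam_pot: "tamari_le t t' \<Longrightarrow> t = t' \<or> pot t < pot t'"
  unfolding tamari_le_def by (induct rule: rtranclp_induct) (auto dest: rot_pot)

lemma tam_antisym: "tamari_le a b \<Longrightarrow> tamari_le b a \<Longrightarrow> a = b"
  by (metis tam_pot less_asym)

lemma rot_split_l: "rot t t' \<Longrightarrow> tamari_le (split_l n t) (split_l n t')"
proof (induct arbitrary: n rule: rot.induct)
  case (rot_root A B C)
  then show ?case by (auto simp: tam_refl tam_rot rot.rot_root)
next
  case (rot_left l l' r)
  then show ?case by (auto simp: tam_refl rot_nodes[OF rot_left(1)] intro: tam_left tam_rot)
next
  case (rot_right r r' l)
  then show ?case by (auto simp: tam_refl intro: tam_right tam_rot)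
qed

lemma rot_split_r: "rot t t' \<Longrightarrow> tamari_le (split_r n t) (split_r n t')"
proof (induct arbitrary: n rule: rot.induct)
  case (rot_root A B C)
  then show ?case by (auto simp: tam_refl tam_rot rot.rot_root)
next
  case (rot_left l l' r)
  then show ?case by (auto simp: tam_refl rot_nodes[OF rot_left(1)] intro: tam_left tam_rot)
next
  case (rot_right r r' l)
  then show ?case by (auto simp: tam_refl intro: tam_right tam_rot)
qed

lemma tam_split_l: "tamari_le t t' \<Longrightarrow> tamari_le (split_l n t) (split_l n t')"
  unfolding tamari_le_def
  by (induct rule: rtranclp_induct) (auto dest: rot_split_l[of _ _ n] simp: tamari_le_def)

lemma tam_split_r: "tamari_le t t' \<Longrightarrow> tamari_le (split_r n t) (split_r n t')"
  unfolding tamari_le_def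
  by (induct rule: rtranclp_induct) (auto dest: rot_split_r[of _ _ n] simp: tamari_le_def)

lemma split_l_self: "split_l (nodes s + k) s = s"
  by (induct s arbitrary: k) auto

lemma split_r_self: "split_r (nodes s + k) s = Leaf"
  by (induct s arbitrary: k) auto

lemma split_l_0: "split_l 0 u = Leaf" by (induct u) auto
lemma split_r_0: "split_r 0 u = u" by (induct u) auto

lemma nodes_under: "nodes (graft_under s u) = nodes s + nodes u" by (induct s) auto
lemma nodes_over: "nodes (graft_over s u) = nodes s + nodes u" by (induct u) auto

lemma split_under: "split_l (nodes s) (graft_under s u) = s \<and> split_r (nodes s) (graft_under s u) = u"
  by (induct s) (auto simp: split_l_0 split_r_0)

lemma split_over: "split_l (nodes s) (graft_over s u) = s \<and> split_r (nodes s) (graft_over s u) = u"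
proof (induct u)
  case Leaf then show ?case using split_l_self[of s 0] split_r_self[of s 0] by simp
next
  case (Node x y) then show ?case by (simp add: nodes_over)
qed

lemma tree_main:
  "(split_l (nodes s) t = s \<and> split_r (nodes s) t = u) \<longleftrightarrow>
   (tamari_le (graft_under s u) t \<and> tamari_le t (graft_over s u))"
proof
  assume "split_l (nodes s) t = s \<and> split_r (nodes s) t = u"
  then show "tamari_le (graft_under s u) t \<and> tamari_le t (graft_over s u)"
    using split_interval[of "nodes s" t] by simp
next
  assume a: "tamari_le (graft_under s u) t \<and> tamari_le t (graft_over s u)"
  have "tamari_le s (split_l (nodes s) t)" "tamari_le (split_l (nodes s) t) s"
    using tam_split_l[of _ _ "nodes s"] a split_under[of s u] split_over[of s u] by metis+
  moreover have "tamari_le u (split_r (nodes s) t)" "tamari_le (split_r (nodes s) t) u"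
    using tam_split_r[of _ _ "nodes s"] a split_under[of s u] split_over[of s u] by metis+
  ultimately show "split_l (nodes s) t = s \<and> split_r (nodes s) t = u"
    using tam_antisym by blast
qed

lemma std_length[simp]: "length (std w) = length w" by (simp add: std_def)

lemma std_nth: "i < length w \<Longrightarrow> std w ! i = card {y \<in> set w. y < w!i} + 1"
  by (simp add: std_def)

lemma card_less_iff:
  fixes w :: "nat list"
  assumes "i < length w" "j < length w"
  shows "card {y \<in> set w. y < w!i} < card {y \<in> set w. y < w!j} \<longleftrightarrow> w!i < w!j"
proof
  assume lt: "w!i < w!j"
  have wi: "w!i \<in> set w" using assms by simp
  have sub: "{y \<in> set w. y < w!i} \<subseteq> {y \<in> set w. y < w!j}" using lt by fastforce
  have "w!i \<in> {y \<in> set w. y < w!j}" "w!i \<notin> {y \<in> set w. y < w!i}" using wi lt by simp_all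
  then have "{y \<in> set w. y < w!i} \<subset> {y \<in> set w. y < w!j}"
    using sub by blast
  then show "card {y \<in> set w. y < w!i} < card {y \<in> set w. y < w!j}"
    by (simp add: psubset_card_mono)
next
  assume c: "card {y \<in> set w. y < w!i} < card {y \<in> set w. y < w!j}"
  show "w!i < w!j"
  proof (rule ccontr)
    assume "\<not> w!i < w!j"
    then have "{y \<in> set w. y < w!j} \<subseteq> {y \<in> set w. y < w!i}" by auto
    then have "card {y \<in> set w. y < w!j} \<le> card {y \<in> set w. y < w!i}"
      by (simp add: card_mono)
    with c show False by simp
  qed
qed

lemma std_ord: "i < length w \<Longrightarrow> j < length w \<Longrightarrow> (std w ! i < std w ! j) \<longleftrightarrow> (w!i < w!j)"
  using card_less_iff by (simp add: std_nth)

lemma card_set_less: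
  fixes w :: "nat list"
  assumes "distinct w"
  shows "card {y \<in> set w. y < x} = card {j. j < length w \<and> w!j < x}"
proof -
  have "{y \<in> set w. y < x} = (\<lambda>j. w!j) ` {j. j < length w \<and> w!j < x}"
    by (auto simp: in_set_conv_nth)
  moreover have "inj_on (\<lambda>j. w!j) {j. j < length w \<and> w!j < x}"
    using assms by (auto simp: inj_on_def nth_eq_iff_index_eq)
  ultimately show ?thesis by (simp add: card_image)
qed

lemma perm_card:
  assumes "is_perm p" "i < length p"
  shows "card {y \<in> set p. y < p!i} = p!i - 1" "p!i \<ge> 1" "p!i \<le> length p"
proof -
  have s: "set p = {1..length p}" using assms by (simp add: is_perm_def)
  have m: "p!i \<in> {1..length p}" using s assms nth_mem by blast
  then show "p!i \<ge> 1" "p!i \<le> length p" by auto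
  have "{y \<in> set p. y < p!i} = {1..<p!i}" using s m by auto
  then show "card {y \<in> set p. y < p!i} = p!i - 1" by simp
qed

lemma std_eq:
  assumes "distinct w" "is_perm p" "length w = length p"
    and o: "\<forall>i<length w. \<forall>j<length w. (w!i < w!j) = (p!i < p!j)"
  shows "std w = p"
proof (rule nth_equalityI)
  show "length (std w) = length p" using assms by simp
next
  fix i assume "i < length (std w)"
  then have i: "i < length w" by simp
  have dp: "distinct p" using assms by (simp add: is_perm_def)
  have "std w ! i = card {j. j < length w \<and> w!j < w!i} + 1"
    using std_nth[OF i] card_set_less[OF assms(1)] by simp
  also have "{j. j < length w \<and> w!j < w!i} = {j. j < length p \<and> p!j < p!i}"
    using o i assms(3) by auto
  also have "card \<dots> = card {y \<in> set p. y < p!i}"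
    using card_set_less[OF dp] by simp
  also have "\<dots> + 1 = p!i" using perm_card[OF assms(2), of i] i assms(3) by simp
  finally show "std w ! i = p ! i" .
qed

lemma std_iff:
  assumes "distinct w" "is_perm p" "length w = length p"
  shows "std w = p \<longleftrightarrow> (\<forall>i j. i < j \<longrightarrow> j < length w \<longrightarrow> (w!j < w!i) = (p!j < p!i))"
proof
  assume e: "std w = p"
  show "\<forall>i j. i < j \<longrightarrow> j < length w \<longrightarrow> (w!j < w!i) = (p!j < p!i)"
  proof (intro allI impI)
    fix i j assume "i < j" "j < length w"
    then show "(w!j < w!i) = (p!j < p!i)" using std_ord[of j w i] e by simp
  qed
next
  assume h: "\<forall>i j. i < j \<longrightarrow> j < length w \<longrightarrow> (w!j < w!i) = (p!j < p!i)"
  have dp: "distinct p" using assms by (simp add: is_perm_def)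
  have "\<forall>i<length w. \<forall>j<length w. (w!i < w!j) = (p!i < p!j)"
  proof (intro allI impI)
    fix i j assume ij: "i < length w" "j < length w"
    consider "i < j" | "i = j" | "j < i" by linarith
    then show "(w!i < w!j) = (p!i < p!j)"
    proof cases
      case 1
      have "w!i \<noteq> w!j" using assms(1) ij 1 by (simp add: nth_eq_iff_index_eq)
      moreover have "p!i \<noteq> p!j" using dp ij 1 assms(3) by (simp add: nth_eq_iff_index_eq)
      ultimately show ?thesis using h 1 ij by (metis linorder_neqE_nat not_less_iff_gr_or_eq)
    next
      case 2 then show ?thesis by simp
    next
      case 3 then show ?thesis using h ij by blast
    qed
  qed
  then show "std w = p" using std_eq assms by blast
qed

lemma perm_inv_sub:
  assumes "length a = N" "length b = N"
  shows "perm_inv a \<subseteq> perm_inv b \<longleftrightarrow> (\<forall>i j. i < j \<longrightarrow> j < N \<longrightarrow> a!j < a!i \<longrightarrow> b!j < b!i)"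
proof
  assume s: "perm_inv a \<subseteq> perm_inv b"
  show "\<forall>i j. i < j \<longrightarrow> j < N \<longrightarrow> a!j < a!i \<longrightarrow> b!j < b!i"
  proof (intro allI impI)
    fix i j assume "i < j" "j < N" "a!j < a!i"
    then have "(Suc i, Suc j) \<in> perm_inv a" using assms by (simp add: perm_inv_def)
    then have "(Suc i, Suc j) \<in> perm_inv b" using s by blast
    then show "b!j < b!i" by (simp add: perm_inv_def)
  qed
next
  assume h: "\<forall>i j. i < j \<longrightarrow> j < N \<longrightarrow> a!j < a!i \<longrightarrow> b!j < b!i"
  show "perm_inv a \<subseteq> perm_inv b"
  proof
    fix x assume "x \<in> perm_inv a"
    then obtain i j where x: "x = (i, j)" "1 \<le> i" "i < j" "j \<le> N" "a!(i-1) > a!(j-1)"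
      using assms by (auto simp: perm_inv_def)
    then have "b!(j-1) < b!(i-1)" using h[rule_format, of "i-1" "j-1"] by simp
    then show "x \<in> perm_inv b" using x assms by (simp add: perm_inv_def)
  qed
qed

lemma perm_main:
  assumes s: "is_perm \<sigma>" "length \<sigma> = n" and t: "is_perm \<tau>" "length \<tau> = m"
    and w: "distinct w" "length w = n + m"
  shows "(std (take n w) = \<sigma> \<and> std (drop n w) = \<tau>) \<longleftrightarrow>
    (perm_inv (\<sigma> @ map (\<lambda>x. x + n) \<tau>) \<subseteq> perm_inv w \<and>
     perm_inv w \<subseteq> perm_inv (map (\<lambda>x. x + m) \<sigma> @ \<tau>))"
    (is "?L \<longleftrightarrow> ?R")
proof -
  define a where "a = \<sigma> @ map (\<lambda>x. x + n) \<tau>"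
  define b where "b = map (\<lambda>x. x + m) \<sigma> @ \<tau>"
  have la: "length a = n + m" and lb: "length b = n + m" using s t by (auto simp: a_def b_def)
  have sb: "\<And>i. i < n \<Longrightarrow> 1 \<le> \<sigma>!i \<and> \<sigma>!i \<le> n" using perm_card(2,3)[OF s(1)] s(2) by auto
  have tb: "\<And>i. i < m \<Longrightarrow> 1 \<le> \<tau>!i \<and> \<tau>!i \<le> m" using perm_card(2,3)[OF t(1)] t(2) by auto
  have a1: "\<And>i. i < n \<Longrightarrow> a!i = \<sigma>!i" using s by (simp add: a_def nth_append)
  have a2: "\<And>i. n \<le> i \<Longrightarrow> i < n + m \<Longrightarrow> a!i = \<tau>!(i-n) + n" using s t by (simp add: a_def nth_append)
  have b1: "\<And>i. i < n \<Longrightarrow> b!i = \<sigma>!i + m" using s by (simp add: b_def nth_append)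
  have b2: "\<And>i. n \<le> i \<Longrightarrow> i < n + m \<Longrightarrow> b!i = \<tau>!(i-n)" using s t by (simp add: b_def nth_append)
  have dt: "distinct (take n w)" "distinct (drop n w)" using w by auto
  have L: "?L \<longleftrightarrow> (\<forall>i j. i < j \<longrightarrow> j < n \<longrightarrow> (w!j < w!i) = (\<sigma>!j < \<sigma>!i)) \<and>
      (\<forall>i j. i < j \<longrightarrow> j < m \<longrightarrow> (w!(n+j) < w!(n+i)) = (\<tau>!j < \<tau>!i))"
    using std_iff[OF dt(1) s(1)] std_iff[OF dt(2) t(1)] s t w by simp
  have R: "?R \<longleftrightarrow> (\<forall>i j. i < j \<longrightarrow> j < n + m \<longrightarrow> a!j < a!i \<longrightarrow> w!j < w!i) \<and>
      (\<forall>i j. i < j \<longrightarrow> j < n + m \<longrightarrow> w!j < w!i \<longrightarrow> b!j < b!i)"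
    using perm_inv_sub[OF la w(2)] perm_inv_sub[OF w(2) lb] by (simp add: a_def b_def)
  show ?thesis
  proof
    assume l: ?L
    then have l1: "\<And>i j. i < j \<Longrightarrow> j < n \<Longrightarrow> (w!j < w!i) = (\<sigma>!j < \<sigma>!i)"
      and l2: "\<And>i j. i < j \<Longrightarrow> j < m \<Longrightarrow> (w!(n+j) < w!(n+i)) = (\<tau>!j < \<tau>!i)"
      using L by auto
    have "(\<forall>i j. i < j \<longrightarrow> j < n + m \<longrightarrow> a!j < a!i \<longrightarrow> w!j < w!i) \<and>
      (\<forall>i j. i < j \<longrightarrow> j < n + m \<longrightarrow> w!j < w!i \<longrightarrow> b!j < b!i)"
    proof (intro conjI allI impI)
      fix i j assume ij: "i < j" "j < n + m"
      consider "j < n" | "n \<le> i" | "i < n" "n \<le> j" by linarith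
      then have "(a!j < a!i \<longrightarrow> w!j < w!i) \<and> (w!j < w!i \<longrightarrow> b!j < b!i)"
      proof cases
        case 1 then show ?thesis using ij l1[of i j] a1 b1 by auto
      next
        case 2
        have "(w!(n+(j-n)) < w!(n+(i-n))) = (\<tau>!(j-n) < \<tau>!(i-n))" by (rule l2) (use ij 2 in auto)
        then have "(w!j < w!i) = (\<tau>!(j-n) < \<tau>!(i-n))" using ij 2 by simp
        then show ?thesis using ij 2 a2 b2 by auto
      next
        case 3
        have "j - n < m" using ij 3 by simp
        then show ?thesis using ij 3 a1 a2 b1 b2 sb[of i] tb[of "j-n"] by auto
      qed
      then show "a!j < a!i \<Longrightarrow> w!j < w!i" "w!j < w!i \<Longrightarrow> b!j < b!i" by auto
    qed
    then show ?R using R by blast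
  next
    assume ?R
    then have r1: "\<And>i j. i < j \<Longrightarrow> j < n + m \<Longrightarrow> a!j < a!i \<Longrightarrow> w!j < w!i"
      and r2: "\<And>i j. i < j \<Longrightarrow> j < n + m \<Longrightarrow> w!j < w!i \<Longrightarrow> b!j < b!i"
      using R by auto
    have "(\<forall>i j. i < j \<longrightarrow> j < n \<longrightarrow> (w!j < w!i) = (\<sigma>!j < \<sigma>!i)) \<and>
      (\<forall>i j. i < j \<longrightarrow> j < m \<longrightarrow> (w!(n+j) < w!(n+i)) = (\<tau>!j < \<tau>!i))"
    proof (intro conjI allI impI)
      fix i j assume ij: "i < j" "j < n"
      show "(w!j < w!i) = (\<sigma>!j < \<sigma>!i)"
        using r1[of i j] r2[of i j] ij a1 b1 by auto
    next
      fix i j assume ij: "i < j" "j < m"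
      show "(w!(n+j) < w!(n+i)) = (\<tau>!j < \<tau>!i)"
        using r1[of "n+i" "n+j"] r2[of "n+i" "n+j"] ij a2[of "n+i"] a2[of "n+j"] b2[of "n+i"] b2[of "n+j"] by auto
    qed
    then show ?L using L by blast
  qed
qed

theorem mainTheorem13:
  assumes "is_pf f" and "is_pf g"
  shows "dual_mult (Fstar f) (Fstar g) =
    (\<lambda>h. if is_pf h \<and> parking_le (pf_under f g) h \<and> parking_le h (pf_over f g)
         then 1 else 0)"
proof
  fix h :: pf
  obtain \<sigma> s where f: "f = (\<sigma>, s)" by fastforce
  obtain \<tau> u where g: "g = (\<tau>, u)" by fastforce
  obtain w t where h: "h = (w, t)" by fastforce
  define n where "n = length \<sigma>"
  define m where "m = length \<tau>"
  have ps: "is_perm \<sigma>" "nodes s = n" and pt: "is_perm \<tau>" "nodes u = m"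
    using assms f g by (auto simp: is_pf_def n_def m_def)
  have under: "pf_under f g = (\<sigma> @ map (\<lambda>x. x + n) \<tau>, graft_under s u)"
    using f g by (simp add: pf_under_def n_def)
  have over: "pf_over f g = (map (\<lambda>x. x + m) \<sigma> @ \<tau>, graft_over s u)"
    using f g by (simp add: pf_over_def m_def)
  show "dual_mult (Fstar f) (Fstar g) h =
    (if is_pf h \<and> parking_le (pf_under f g) h \<and> parking_le h (pf_over f g) then 1 else 0)"
  proof (cases "is_pf h")
    case False then show ?thesis by (simp add: dual_mult_def)
  next
    case True
    have dw: "distinct w" and nt: "nodes t = length w"
      using True h by (auto simp: is_pf_def is_perm_def)
    define C where "C = (std (take n w) = \<sigma> \<and> split_l n t = s \<and> std (drop n w) = \<tau> \<and> split_r n t = u)"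
    have trm: "(Fstar f (pf_split_l i h) * Fstar g (pf_split_r i h)) = (if i = n then (if C then 1 else 0) else 0)"
      if "i \<in> {0..pf_deg h}" for i
    proof -
      have il: "i \<le> length w" using that h by (simp add: pf_deg_def)
      show ?thesis
      proof (cases "i = n")
        case True then show ?thesis using f g h by (auto simp: Fstar_def C_def pf_split_l_def pf_split_r_def)
      next
        case False
        have "pf_split_l i h \<noteq> f"
        proof
          assume "pf_split_l i h = f"
          then have "length (std (take i w)) = n" using f h by (simp add: pf_split_l_def n_def)
          then show False using il False by simp
        qed
        then show ?thesis using False by (simp add: Fstar_def)
      qed
    qed
    have "dual_mult (Fstar f) (Fstar g) h = (\<Sum>i\<in>{0..pf_deg h}. (if i = n then (if C then 1 else 0) else 0))"
      using True trm by (simp add: dual_mult_def)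
    also have "\<dots> = (if n \<in> {0..pf_deg h} then (if C then 1 else 0) else 0)"
      by (rule sum.delta) simp
    also have "\<dots> = (if C then 1 else 0)"
    proof -
      have "C \<Longrightarrow> n \<le> length w"
      proof -
        assume C
        then have "length (std (take n w)) = n" using C_def n_def by simp
        then show ?thesis by simp
      qed
      then show ?thesis using h by (auto simp: pf_deg_def)
    qed
    finally have lhs: "dual_mult (Fstar f) (Fstar g) h = (if C then 1 else 0)" .
    have lenC: "C \<Longrightarrow> length w = n + m"
    proof -
      assume C
      then have "length (std (take n w)) = n" "length (std (drop n w)) = m" using C_def n_def m_def by simp_all
      then show ?thesis by simp
    qed
    have lenR: "parking_le (pf_under f g) h \<Longrightarrow> length w = n + m"
      using under h ps pt by (simp add: parking_le_def weak_le_def n_def m_def)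
    have "C \<longleftrightarrow> parking_le (pf_under f g) h \<and> parking_le h (pf_over f g)"
    proof (cases "length w = n + m")
      case len: True
      have "C \<longleftrightarrow> (std (take n w) = \<sigma> \<and> std (drop n w) = \<tau>) \<and>
           (split_l (nodes s) t = s \<and> split_r (nodes s) t = u)"
        using ps by (auto simp: C_def)
      also have "\<dots> \<longleftrightarrow> (perm_inv (\<sigma> @ map (\<lambda>x. x + n) \<tau>) \<subseteq> perm_inv w \<and>
           perm_inv w \<subseteq> perm_inv (map (\<lambda>x. x + m) \<sigma> @ \<tau>)) \<and>
           (tamari_le (graft_under s u) t \<and> tamari_le t (graft_over s u))"
        using perm_main[OF ps(1) n_def[symmetric] pt(1) m_def[symmetric] dw len] tree_main[of s t u]
        by simp
      also have "\<dots> \<longleftrightarrow> parking_le (pf_under f g) h \<and> parking_le h (pf_over f g)"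
        using under over h len by (auto simp: parking_le_def weak_le_def n_def m_def)
      finally show ?thesis .
    next
      case False then show ?thesis using lenC lenR by blast
    qed
    then show ?thesis using lhs True by simp
  qed
qed
end
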